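(* Let $G$ be a group and $\rho_k:G\to\mathrm{GL}(W_k)$ (indexed by $k$) pairwise non-isomorphic irreducible representations satisfying the strong version of Schur's lemma. Let $U=\bigoplus_k W_k^{\oplus n_k}$ and $V=\bigoplus_k W_k^{\oplus m_k}$ ($n_k,m_k\ge0$ integers) carry the representations $\rho_U=\bigoplus_k\rho_k^{\oplus n_k}$, $\rho_V=\bigoplus_k\rho_k^{\oplus m_k}$. Let $t_U:U\to U$ and $t_V:V\to V$ be linear, with block components $(t_U)_{k\ell}:W_k^{\oplus n_k}\to W_\ell^{\oplus n_\ell}$ and $(t_V)_{k\ell}:W_k^{\oplus m_k}\to W_\ell^{\oplus m_\ell}$. Then $t_VL=Lt_U$ for every linear $(\rho_U,\rho_V)$-equivariant $L:U\to V$ if and only if all of the following hold: (i) if $m_k\neq0$ and $n_k\neq0$, then, viewed as $m_k\times m_k$ and $n_k\times n_k$ matrices of maps $W_k\to W_k$, $(t_V)_{kk}$ and $(t_U)_{kk}$ are diagonal with $(t_V)_{kk,ii}=(t_U)_{kk,jj}$ for all $i\in[m_k]$, $j\in[n_k]$; (ii) for all $k\neq\ell$ with $m_k,n_k,n_\ell$ all nonzero, $(t_U)_{k\ell}=0$; (iii) for all $k\neq\ell$ with $m_k,m_\ell,n_\ell$ all nonzero, $(t_V)_{k\ell}=0$.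
   Context: A representation is irreducible if it has no invariant subspaces other than $0$ and the whole (nonzero) space. It satisfies the strong version of Schur's lemma if every linear map $W_k\to W_k$ commuting with all $\rho_k(g)$ is a scalar multiple of the identity. $L$ is $(\rho_U,\rho_V)$-equivariant if $L\rho_U(g)=\rho_V(g)L$ for all $g\in G$. $\rho^{\oplus n}$ denotes the direct sum of $n$ copies. *)

theory Defs
  imports Complex_Main "HOL-Library.Function_Algebras" "HOL-Algebra.Group"
begin

text \<open>All spaces live inside one ambient vector space of type 'w over a field 'a,
  with scalar multiplication s. A subset A is a space via module.subspace s A.\<close>

definition lin_on :: "('a::field \<Rightarrow> 'v::ab_group_add \<Rightarrow> 'v) \<Rightarrow> ('a \<Rightarrow> 'u::ab_group_add \<Rightarrow> 'u)
    \<Rightarrow> 'v set \<Rightarrow> 'u set \<Rightarrow> ('v \<Rightarrow> 'u) \<Rightarrow> bool" where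
  "lin_on s1 s2 A B f \<longleftrightarrow> f ` A \<subseteq> B \<and> (\<forall>x\<in>A. \<forall>y\<in>A. f (x + y) = f x + f y)
     \<and> (\<forall>c. \<forall>x\<in>A. f (s1 c x) = s2 c (f x))"

definition is_rep :: "('g, 'b) monoid_scheme \<Rightarrow> ('a::field \<Rightarrow> 'w::ab_group_add \<Rightarrow> 'w) \<Rightarrow> 'w set
    \<Rightarrow> ('g \<Rightarrow> 'w \<Rightarrow> 'w) \<Rightarrow> bool" where
  "is_rep G s W r \<longleftrightarrow> module.subspace s W
     \<and> (\<forall>g\<in>carrier G. lin_on s s W W (r g) \<and> bij_betw (r g) W W)
     \<and> (\<forall>w\<in>W. r \<one>\<^bsub>G\<^esub> w = w)
     \<and> (\<forall>g\<in>carrier G. \<forall>h\<in>carrier G. \<forall>w\<in>W. r (g \<otimes>\<^bsub>G\<^esub> h) w = r g (r h w))"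

definition irred_rep :: "('g, 'b) monoid_scheme \<Rightarrow> ('a::field \<Rightarrow> 'w::ab_group_add \<Rightarrow> 'w) \<Rightarrow> 'w set
    \<Rightarrow> ('g \<Rightarrow> 'w \<Rightarrow> 'w) \<Rightarrow> bool" where
  "irred_rep G s W r \<longleftrightarrow> W \<noteq> {0} \<and>
     (\<forall>S. module.subspace s S \<and> S \<subseteq> W \<and> (\<forall>g\<in>carrier G. r g ` S \<subseteq> S) \<longrightarrow> S = {0} \<or> S = W)"

definition equivariant :: "('g, 'b) monoid_scheme \<Rightarrow> ('a::field \<Rightarrow> 'v::ab_group_add \<Rightarrow> 'v)
    \<Rightarrow> ('a \<Rightarrow> 'u::ab_group_add \<Rightarrow> 'u) \<Rightarrow> 'v set \<Rightarrow> 'u set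
    \<Rightarrow> ('g \<Rightarrow> 'v \<Rightarrow> 'v) \<Rightarrow> ('g \<Rightarrow> 'u \<Rightarrow> 'u) \<Rightarrow> ('v \<Rightarrow> 'u) \<Rightarrow> bool" where
  "equivariant G s1 s2 A B r1 r2 f \<longleftrightarrow> lin_on s1 s2 A B f
     \<and> (\<forall>g\<in>carrier G. \<forall>x\<in>A. f (r1 g x) = r2 g (f x))"

definition schur_strong :: "('g, 'b) monoid_scheme \<Rightarrow> ('a::field \<Rightarrow> 'w::ab_group_add \<Rightarrow> 'w) \<Rightarrow> 'w set
    \<Rightarrow> ('g \<Rightarrow> 'w \<Rightarrow> 'w) \<Rightarrow> bool" where
  "schur_strong G s W r \<longleftrightarrow>
     (\<forall>f. equivariant G s s W W r r f \<longrightarrow> (\<exists>c. \<forall>w\<in>W. f w = s c w))"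

definition rep_iso :: "('g, 'b) monoid_scheme \<Rightarrow> ('a::field \<Rightarrow> 'w::ab_group_add \<Rightarrow> 'w) \<Rightarrow> 'w set \<Rightarrow> 'w set
    \<Rightarrow> ('g \<Rightarrow> 'w \<Rightarrow> 'w) \<Rightarrow> ('g \<Rightarrow> 'w \<Rightarrow> 'w) \<Rightarrow> bool" where
  "rep_iso G s W1 W2 r1 r2 \<longleftrightarrow> (\<exists>f. equivariant G s s W1 W2 r1 r2 f \<and> bij_betw f W1 W2)"

text \<open>The direct sum \<Oplus>_{k\<in>I} W_k^{\<oplus> n k}: finitely supported families u k i, with u k i \<in> W k
  for k \<in> I, i < n k, and u k i = 0 otherwise.\<close>
definition dsum :: "'k set \<Rightarrow> ('k \<Rightarrow> 'w::zero set) \<Rightarrow> ('k \<Rightarrow> nat) \<Rightarrow> ('k \<Rightarrow> nat \<Rightarrow> 'w) set" where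
  "dsum I W n = {u. (\<forall>k i. if k \<in> I \<and> i < n k then u k i \<in> W k else u k i = 0)
                    \<and> finite {(k, i). u k i \<noteq> 0}}"

definition dscale :: "('a \<Rightarrow> 'w \<Rightarrow> 'w) \<Rightarrow> 'a \<Rightarrow> ('k \<Rightarrow> nat \<Rightarrow> 'w) \<Rightarrow> ('k \<Rightarrow> nat \<Rightarrow> 'w)" where
  "dscale s c u = (\<lambda>k i. s c (u k i))"

definition drep :: "'k set \<Rightarrow> ('k \<Rightarrow> nat) \<Rightarrow> ('k \<Rightarrow> 'g \<Rightarrow> 'w::zero \<Rightarrow> 'w) \<Rightarrow> 'g
    \<Rightarrow> ('k \<Rightarrow> nat \<Rightarrow> 'w) \<Rightarrow> ('k \<Rightarrow> nat \<Rightarrow> 'w)" where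
  "drep I n \<rho> g u = (\<lambda>k i. if k \<in> I \<and> i < n k then \<rho> k g (u k i) else 0)"

definition dinj :: "'k \<Rightarrow> nat \<Rightarrow> 'w::zero \<Rightarrow> ('k \<Rightarrow> nat \<Rightarrow> 'w)" where
  "dinj k j w = (\<lambda>k' i. if k' = k \<and> i = j then w else 0)"

text \<open>Matrix entry of t: row (k,i), column (l,j); a map W_l \<rightarrow> W_k.
  The block t_{kl} (row block k, column block l) consists of the entries blk t k i l j.\<close>
definition blk :: "(('k \<Rightarrow> nat \<Rightarrow> 'w::zero) \<Rightarrow> ('k \<Rightarrow> nat \<Rightarrow> 'w)) \<Rightarrow> 'k \<Rightarrow> nat \<Rightarrow> 'k \<Rightarrow> nat \<Rightarrow> 'w \<Rightarrow> 'w" where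
  "blk t k i l j w = t (dinj l j w) k i"

end

theory Submission
  imports Defs
begin

lemma fun_sum_apply: "(\<Sum>a\<in>A. f a) x = (\<Sum>a\<in>A. f a x)"
proof (cases "finite A")
  case True then show ?thesis by (induction A rule: finite_induct) auto
qed simp

lemma lin_zero: "lin_on s1 s2 A B f \<Longrightarrow> 0 \<in> A \<Longrightarrow> f 0 = 0"
  unfolding lin_on_def by (metis add.right_neutral add_left_cancel)

lemma lin_add: "lin_on s1 s2 A B f \<Longrightarrow> x \<in> A \<Longrightarrow> y \<in> A \<Longrightarrow> f (x + y) = f x + f y"
  unfolding lin_on_def by blast

lemma lin_scale: "lin_on s1 s2 A B f \<Longrightarrow> x \<in> A \<Longrightarrow> f (s1 c x) = s2 c (f x)"
  unfolding lin_on_def by blast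

lemma lin_mem: "lin_on s1 s2 A B f \<Longrightarrow> x \<in> A \<Longrightarrow> f x \<in> B"
  unfolding lin_on_def by blast

lemma lin_sum:
  assumes "lin_on s1 s2 A B f" "0 \<in> A" "\<And>x y. x \<in> A \<Longrightarrow> y \<in> A \<Longrightarrow> x + y \<in> A"
    "finite S" "\<forall>a\<in>S. g a \<in> A"
  shows "f (sum g S) = (\<Sum>a\<in>S. f (g a)) \<and> sum g S \<in> A"
  using assms(4,5)
proof (induction S rule: finite_induct)
  case empty then show ?case using lin_zero[OF assms(1,2)] assms(2) by simp
next
  case (insert x F)
  then show ?case using lin_add[OF assms(1)] assms(3) by simp
qed

lemma subsp: fixes s :: "'a::field \<Rightarrow> 'w::ab_group_add \<Rightarrow> 'w"
  assumes "vector_space s"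
  shows "module.subspace s W \<Longrightarrow> 0 \<in> W \<and> (\<forall>x\<in>W. \<forall>y\<in>W. x + y \<in> W) \<and> (\<forall>c. \<forall>x\<in>W. s c x \<in> W)"
  using module.subspace_def[of s W] assms module_iff_vector_space by blast

lemma dsum_zero: "\<forall>k\<in>I. 0 \<in> W k \<Longrightarrow> 0 \<in> dsum I W n"
  unfolding dsum_def by auto

lemma dsum_mem: "u \<in> dsum I W n \<Longrightarrow> k \<in> I \<Longrightarrow> i < n k \<Longrightarrow> u k i \<in> W k"
  unfolding dsum_def by (metis (mono_tags, lifting) mem_Collect_eq)

lemma dsum_out: "u \<in> dsum I W n \<Longrightarrow> \<not> (k \<in> I \<and> i < n k) \<Longrightarrow> u k i = 0"
  unfolding dsum_def by (metis (mono_tags, lifting) mem_Collect_eq)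

lemma dsum_fin: "u \<in> dsum I W n \<Longrightarrow> finite {(k, i). u k i \<noteq> 0}"
  unfolding dsum_def by blast

lemma dsumI: "(\<And>k i. k \<in> I \<Longrightarrow> i < n k \<Longrightarrow> u k i \<in> W k) \<Longrightarrow> (\<And>k i. \<not> (k \<in> I \<and> i < n k) \<Longrightarrow> u k i = 0)
   \<Longrightarrow> finite {(k, i). u k i \<noteq> 0} \<Longrightarrow> u \<in> dsum I W n"
  unfolding dsum_def by auto

lemma dsum_add:
  fixes W :: "'k \<Rightarrow> 'w::ab_group_add set"
  assumes "\<forall>k\<in>I. \<forall>x\<in>W k. \<forall>y\<in>W k. x + y \<in> W k" "u \<in> dsum I W n" "v \<in> dsum I W n"
  shows "u + v \<in> dsum I W n"
proof (rule dsumI)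
  have "{(k, i). (u + v) k i \<noteq> 0} \<subseteq> {(k, i). u k i \<noteq> 0} \<union> {(k, i). v k i \<noteq> 0}" by fastforce
  then show "finite {(k, i). (u + v) k i \<noteq> 0}"
    using dsum_fin[OF assms(2)] dsum_fin[OF assms(3)] finite_subset by blast
next
  fix k i assume "k \<in> I" "i < n k"
  then show "(u + v) k i \<in> W k" using assms(1) dsum_mem[OF assms(2)] dsum_mem[OF assms(3)] by simp
next
  fix k i assume "\<not> (k \<in> I \<and> i < n k)"
  then show "(u + v) k i = 0" using dsum_out[OF assms(2)] dsum_out[OF assms(3)] by simp
qed

lemma dinj_in:
  assumes "\<forall>k\<in>I. 0 \<in> W k" "l \<in> I" "j < n l" "w \<in> W l"
  shows "dinj l j w \<in> dsum I W n"
proof (rule dsumI)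
  have "{(k, i). dinj l j w k i \<noteq> 0} \<subseteq> {(l,j)}" by (auto simp: dinj_def)
  then show "finite {(k, i). dinj l j w k i \<noteq> 0}" using finite_subset by blast
qed (use assms in \<open>auto simp: dinj_def\<close>)

lemma dsum_induct_aux:
  fixes W :: "'k \<Rightarrow> 'w::ab_group_add set" and P :: "('k \<Rightarrow> nat \<Rightarrow> 'w) \<Rightarrow> bool"
  assumes W0: "\<forall>k\<in>I. 0 \<in> W k" and Wadd: "\<forall>k\<in>I. \<forall>x\<in>W k. \<forall>y\<in>W k. x + y \<in> W k"
    and P0: "P 0"
    and Pinj: "\<And>l j w. l \<in> I \<Longrightarrow> j < n l \<Longrightarrow> w \<in> W l \<Longrightarrow> P (dinj l j w)"
    and Padd: "\<And>u v. u \<in> dsum I W n \<Longrightarrow> v \<in> dsum I W n \<Longrightarrow> P u \<Longrightarrow> P v \<Longrightarrow> P (u + v)"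
    and F: "finite F"
  shows "\<forall>u \<in> dsum I W n. {(k, i). u k i \<noteq> 0} \<subseteq> F \<longrightarrow> P u"
  using F
proof (induction F rule: finite_induct)
  case empty
  show ?case
  proof (intro ballI impI)
    fix u :: "'k \<Rightarrow> nat \<Rightarrow> 'w" assume "{(k, i). u k i \<noteq> 0} \<subseteq> {}"
    then have "u = 0" by (auto simp: fun_eq_iff)
    then show "P u" using P0 by simp
  qed
next
  case (insert p F)
  obtain l j where p: "p = (l, j)" by fastforce
  show ?case
  proof (intro ballI impI)
    fix u :: "'k \<Rightarrow> nat \<Rightarrow> 'w" assume u: "u \<in> dsum I W n" and sup: "{(k, i). u k i \<noteq> 0} \<subseteq> insert p F"
    define u' where "u' = (\<lambda>k i. if k = l \<and> i = j then 0 else u k i)"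
    have u'D: "u' \<in> dsum I W n"
    proof (rule dsumI)
      have "{(k, i). u' k i \<noteq> 0} \<subseteq> {(k, i). u k i \<noteq> 0}" by (auto simp: u'_def)
      then show "finite {(k, i). u' k i \<noteq> 0}" using dsum_fin[OF u] finite_subset by blast
    next
      fix k i assume "k \<in> I" "i < n k"
      then show "u' k i \<in> W k" using W0 dsum_mem[OF u] by (auto simp: u'_def)
    next
      fix k i assume "\<not> (k \<in> I \<and> i < n k)"
      then show "u' k i = 0" using dsum_out[OF u] by (simp add: u'_def)
    qed
    have "{(k, i). u' k i \<noteq> 0} \<subseteq> F"
      using sup by (auto simp: u'_def p split: if_splits)
    then have Pu': "P u'"
      using insert.IH u'D by blast
    show "P u"
    proof (cases "u l j = 0")
      case True
      then have "u' = u" by (auto simp: u'_def fun_eq_iff)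
      then show ?thesis using Pu' by simp
    next
      case False
      then have lj: "l \<in> I" "j < n l" using dsum_out[OF u] by blast+
      have uD: "dinj l j (u l j) \<in> dsum I W n" using dinj_in[of I W l j n, OF W0 lj dsum_mem[OF u lj]] .
      have "u = dinj l j (u l j) + u'" by (auto simp: u'_def dinj_def fun_eq_iff)
      then show ?thesis using Padd[OF uD u'D Pinj[OF lj dsum_mem[OF u lj]] Pu'] by simp
    qed
  qed
qed

lemma dsum_induct:
  fixes W :: "'k \<Rightarrow> 'w::ab_group_add set" and P :: "('k \<Rightarrow> nat \<Rightarrow> 'w) \<Rightarrow> bool"
  assumes "u \<in> dsum I W n" "\<forall>k\<in>I. 0 \<in> W k" "\<forall>k\<in>I. \<forall>x\<in>W k. \<forall>y\<in>W k. x + y \<in> W k"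
    "P 0"
    "\<And>l j w. l \<in> I \<Longrightarrow> j < n l \<Longrightarrow> w \<in> W l \<Longrightarrow> P (dinj l j w)"
    "\<And>u v. u \<in> dsum I W n \<Longrightarrow> v \<in> dsum I W n \<Longrightarrow> P u \<Longrightarrow> P v \<Longrightarrow> P (u + v)"
  shows "P u"
  using dsum_induct_aux[of I W P n, OF assms(2-6) dsum_fin[OF assms(1)]] assms(1) by blast


lemma rep_lin: "is_rep G s W r \<Longrightarrow> g \<in> carrier G \<Longrightarrow> lin_on s s W W (r g)"
  unfolding is_rep_def by blast

lemma rep_zero:
  fixes s :: "'a::field \<Rightarrow> 'w::ab_group_add \<Rightarrow> 'w"
  assumes "vector_space s" "is_rep G s W r" "g \<in> carrier G"
  shows "r g 0 = 0"
proof -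
  have "0 \<in> W" using subsp[OF assms(1)] assms(2) unfolding is_rep_def by blast
  then show ?thesis using lin_zero[OF rep_lin[OF assms(2,3)]] by blast
qed

lemma schur_zero:
  fixes s :: "'a::field \<Rightarrow> 'w::ab_group_add \<Rightarrow> 'w"
  assumes vs: "vector_space s" and R1: "is_rep G s W1 r1" and R2: "is_rep G s W2 r2"
    and I1: "irred_rep G s W1 r1" and I2: "irred_rep G s W2 r2"
    and NI: "\<not> rep_iso G s W1 W2 r1 r2"
    and E: "equivariant G s s W1 W2 r1 r2 f" and w: "w \<in> W1"
  shows "f w = 0"
proof -
  interpret vector_space s by (rule vs)
  have lin: "lin_on s s W1 W2 f" and eq: "\<forall>g\<in>carrier G. \<forall>x\<in>W1. f (r1 g x) = r2 g (f x)"
    using E unfolding equivariant_def by blast+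
  have S1: "subspace W1" and S2: "subspace W2" using R1 R2 unfolding is_rep_def by blast+
  have z1: "0 \<in> W1" using S1 subspace_0 by blast
  have f0: "f 0 = 0" using lin_zero[OF lin z1] .
  define K where "K = {x\<in>W1. f x = 0}"
  have SK: "subspace K"
    unfolding subspace_def K_def
    using z1 f0 subspace_add[OF S1] subspace_scale[OF S1] lin_add[OF lin] lin_scale[OF lin]
    by auto
  have invK: "\<forall>g\<in>carrier G. r1 g ` K \<subseteq> K"
  proof (intro ballI subsetI)
    fix g y assume g: "g \<in> carrier G" and "y \<in> r1 g ` K"
    then obtain x where x: "x \<in> K" "y = r1 g x" by blast
    have "r1 g x \<in> W1" using lin_mem[OF rep_lin[OF R1 g]] x K_def by blast
    moreover have "f (r1 g x) = 0" using eq g x rep_zero[OF vs R2 g] K_def by auto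
    ultimately show "y \<in> K" using x K_def by blast
  qed
  have "K = {0} \<or> K = W1"
    using I1 SK invK unfolding irred_rep_def K_def by blast
  moreover
  {
    assume K0: "K = {0}"
    have inj: "inj_on f W1"
    proof (rule inj_onI)
      fix x y assume x: "x \<in> W1" and y: "y \<in> W1" and fxy: "f x = f y"
      have d: "x - y \<in> W1" using subspace_diff[OF S1 x y] .
      have "f (x + s (-1) y) = f x + s (-1) (f y)"
        using lin_add[OF lin x subspace_scale[OF S1 y]] lin_scale[OF lin y] by metis
      moreover have "x + s (-1) y = x - y" "s (-1) (f y) = - f y" by simp_all
      ultimately have "f (x - y) = f x + - f y" by metis
      then have "f (x - y) = 0" using fxy by simp
      then have "x - y \<in> K" using d K_def by blast
      then show "x = y" using K0 by simp
    qed
    have SI: "subspace (f ` W1)"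
      unfolding subspace_def
    proof (intro conjI ballI allI)
      show "0 \<in> f ` W1" using z1 f0 by force
    next
      fix a b assume "a \<in> f ` W1" "b \<in> f ` W1"
      then obtain x y where "x \<in> W1" "y \<in> W1" "a = f x" "b = f y" by blast
      then show "a + b \<in> f ` W1" using lin_add[OF lin] subspace_add[OF S1] by (metis image_eqI)
    next
      fix c a assume "a \<in> f ` W1"
      then obtain x where "x \<in> W1" "a = f x" by blast
      then show "s c a \<in> f ` W1" using lin_scale[OF lin] subspace_scale[OF S1] by (metis image_eqI)
    qed
    have subI: "f ` W1 \<subseteq> W2" using lin unfolding lin_on_def by blast
    have invI: "\<forall>g\<in>carrier G. r2 g ` (f ` W1) \<subseteq> f ` W1"
    proof (intro ballI subsetI)
      fix g y assume g: "g \<in> carrier G" and "y \<in> r2 g ` (f ` W1)"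
      then obtain x where x: "x \<in> W1" "y = r2 g (f x)" by blast
      then have "y = f (r1 g x)" using eq g by simp
      moreover have "r1 g x \<in> W1" using lin_mem[OF rep_lin[OF R1 g] x(1)] .
      ultimately show "y \<in> f ` W1" by blast
    qed
    have "f ` W1 = {0} \<or> f ` W1 = W2"
      using I2 SI subI invI unfolding irred_rep_def by blast
    moreover
    {
      assume "f ` W1 = {0}"
      then have "W1 \<subseteq> K" unfolding K_def by auto
      then have "W1 = {0}" using K0 z1 by auto
      then have False using I1 unfolding irred_rep_def by blast
    }
    moreover
    {
      assume "f ` W1 = W2"
      then have "bij_betw f W1 W2" using inj unfolding bij_betw_def by blast
      then have False using NI E unfolding rep_iso_def by blast
    }
    ultimately have False by blast
  }
  ultimately have "K = W1" by blast
  then show ?thesis using w K_def by blast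
qed


lemma dinj_apply: "dinj k i x k' i' = (if k' = k \<and> i' = i then x else 0)"
  by (simp add: dinj_def)

lemma dinj_0[simp]: "dinj k i 0 = 0"
  by (auto simp: dinj_def fun_eq_iff)

lemma dinj_at[simp]: "dinj k i x k i = x"
  by (simp add: dinj_def)

lemma dinj_add: fixes x :: "'w::monoid_add" shows "dinj k i (x + y) = dinj k i x + dinj k i y"
  by (auto simp: dinj_def fun_eq_iff)

context
  fixes G :: "('g, 'b) monoid_scheme"
    and s :: "'a::field \<Rightarrow> 'w::ab_group_add \<Rightarrow> 'w"
    and I :: "'k set" and W :: "'k \<Rightarrow> 'w set" and \<rho> :: "'k \<Rightarrow> 'g \<Rightarrow> 'w \<Rightarrow> 'w"
    and n m :: "'k \<Rightarrow> nat"
    and tU tV :: "('k \<Rightarrow> nat \<Rightarrow> 'w) \<Rightarrow> ('k \<Rightarrow> nat \<Rightarrow> 'w)"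
  assumes vs: "vector_space s"
    and reps: "\<forall>k\<in>I. is_rep G s (W k) (\<rho> k) \<and> irred_rep G s (W k) (\<rho> k) \<and> schur_strong G s (W k) (\<rho> k)"
    and niso: "\<forall>k\<in>I. \<forall>l\<in>I. k \<noteq> l \<longrightarrow> \<not> rep_iso G s (W k) (W l) (\<rho> k) (\<rho> l)"
    and linU: "lin_on (dscale s) (dscale s) (dsum I W n) (dsum I W n) tU"
    and linV: "lin_on (dscale s) (dscale s) (dsum I W m) (dsum I W m) tV"
begin

interpretation vector_space s by (rule vs)

lemma subW: "k \<in> I \<Longrightarrow> 0 \<in> W k \<and> (\<forall>x\<in>W k. \<forall>y\<in>W k. x + y \<in> W k) \<and> (\<forall>c. \<forall>x\<in>W k. s c x \<in> W k)"
proof -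
  assume k: "k \<in> I"
  then have "is_rep G s (W k) (\<rho> k)" using reps by blast
  then have "module.subspace s (W k)" unfolding is_rep_def by blast
  then show ?thesis by (rule subsp[OF vs])
qed

lemma W0: "\<forall>k\<in>I. 0 \<in> W k"
  using subW by blast

lemma Wadd: "\<forall>k\<in>I. \<forall>x\<in>W k. \<forall>y\<in>W k. x + y \<in> W k"
  using subW by blast

lemma Wsc: "\<forall>k\<in>I. \<forall>c. \<forall>x\<in>W k. s c x \<in> W k"
  using subW by blast

lemma rho0: "k \<in> I \<Longrightarrow> g \<in> carrier G \<Longrightarrow> \<rho> k g 0 = 0"
proof -
  assume k: "k \<in> I" and g: "g \<in> carrier G"
  have r: "is_rep G s (W k) (\<rho> k)" using reps k by blast
  show ?thesis by (rule rep_zero[OF vs r g])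
qed

lemma D0: "0 \<in> dsum I W p"
  using dsum_zero[OF W0] .

lemma Dadd: "u \<in> dsum I W p \<Longrightarrow> v \<in> dsum I W p \<Longrightarrow> u + v \<in> dsum I W p"
  using dsum_add[OF Wadd] by blast

lemma Dinj: "l \<in> I \<Longrightarrow> j < p l \<Longrightarrow> w \<in> W l \<Longrightarrow> dinj l j w \<in> dsum I W p"
  using dinj_in[OF W0] by blast

lemma dinj_scale: "dinj k i (s c x) = dscale s c (dinj k i x)"
  by (auto simp: dinj_def dscale_def fun_eq_iff)

lemma elemL:
  assumes k: "k \<in> I" "i' < m k" "j < n k"
  shows "equivariant G (dscale s) (dscale s) (dsum I W n) (dsum I W m) (drep I n \<rho>) (drep I m \<rho>)
           (\<lambda>u. dinj k i' (u k j))"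
  unfolding equivariant_def lin_on_def
proof (intro conjI ballI allI subsetI)
  fix y assume "y \<in> (\<lambda>u. dinj k i' (u k j)) ` dsum I W n"
  then obtain u where u: "u \<in> dsum I W n" "y = dinj k i' (u k j)" by blast
  then show "y \<in> dsum I W m" using Dinj[of k i' m, OF k(1,2) dsum_mem[OF u(1) k(1,3)]] by simp
next
  fix x y :: "'k \<Rightarrow> nat \<Rightarrow> 'w" show "dinj k i' ((x + y) k j) = dinj k i' (x k j) + dinj k i' (y k j)"
    by (auto simp: dinj_def fun_eq_iff)
next
  fix c and x :: "'k \<Rightarrow> nat \<Rightarrow> 'w" show "dinj k i' (dscale s c x k j) = dscale s c (dinj k i' (x k j))"
    by (simp add: dscale_def dinj_scale)
next
  fix g x assume g: "g \<in> carrier G" and x: "x \<in> dsum I W n"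
  show "dinj k i' (drep I n \<rho> g x k j) = drep I m \<rho> g (dinj k i' (x k j))"
    using k rho0[OF _ g] by (auto simp: drep_def dinj_def fun_eq_iff)
qed

lemma forward:
  assumes H: "\<forall>L. equivariant G (dscale s) (dscale s) (dsum I W n) (dsum I W m) (drep I n \<rho>) (drep I m \<rho>) L
             \<longrightarrow> (\<forall>u\<in>dsum I W n. tV (L u) = L (tU u))"
  shows "((\<forall>k\<in>I. m k \<noteq> 0 \<and> n k \<noteq> 0 \<longrightarrow>
        (\<forall>i<m k. \<forall>i'<m k. i \<noteq> i' \<longrightarrow> (\<forall>w\<in>W k. blk tV k i k i' w = 0))
      \<and> (\<forall>j<n k. \<forall>j'<n k. j \<noteq> j' \<longrightarrow> (\<forall>w\<in>W k. blk tU k j k j' w = 0))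
      \<and> (\<forall>i<m k. \<forall>j<n k. \<forall>w\<in>W k. blk tV k i k i w = blk tU k j k j w))
   \<and> (\<forall>k\<in>I. \<forall>l\<in>I. k \<noteq> l \<and> m k \<noteq> 0 \<and> n k \<noteq> 0 \<and> n l \<noteq> 0 \<longrightarrow>
        (\<forall>i<n k. \<forall>j<n l. \<forall>w\<in>W l. blk tU k i l j w = 0))
   \<and> (\<forall>k\<in>I. \<forall>l\<in>I. k \<noteq> l \<and> m k \<noteq> 0 \<and> m l \<noteq> 0 \<and> n l \<noteq> 0 \<longrightarrow>
        (\<forall>i<m k. \<forall>j<m l. \<forall>w\<in>W l. blk tV k i l j w = 0)))"
proof -
  have HL: "tV (dinj k i' (u k j)) = dinj k i' (tU u k j)"
    if "k \<in> I" "i' < m k" "j < n k" "u \<in> dsum I W n" for k i' j u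
    using H elemL[OF that(1-3)] that(4) by blast
  have tV0: "tV 0 = 0" using lin_zero[OF linV D0] .
  have P1: "\<forall>k\<in>I. m k \<noteq> 0 \<and> n k \<noteq> 0 \<longrightarrow>
        (\<forall>i<m k. \<forall>i'<m k. i \<noteq> i' \<longrightarrow> (\<forall>w\<in>W k. blk tV k i k i' w = 0))
      \<and> (\<forall>j<n k. \<forall>j'<n k. j \<noteq> j' \<longrightarrow> (\<forall>w\<in>W k. blk tU k j k j' w = 0))
      \<and> (\<forall>i<m k. \<forall>j<n k. \<forall>w\<in>W k. blk tV k i k i w = blk tU k j k j w)"
  proof (intro ballI impI conjI)
    fix k assume k: "k \<in> I" and mn: "m k \<noteq> 0 \<and> n k \<noteq> 0"
    have m0: "0 < m k" and n0: "0 < n k" using mn by auto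
    show "\<forall>i<m k. \<forall>i'<m k. i \<noteq> i' \<longrightarrow> (\<forall>w\<in>W k. blk tV k i k i' w = 0)"
    proof (intro allI impI ballI)
      fix i i' w assume i: "i < m k" "i' < m k" "i \<noteq> i'" and w: "w \<in> W k"
      have "tV (dinj k i' (dinj k 0 w k 0)) = dinj k i' (tU (dinj k 0 w) k 0)"
        using HL[OF k i(2) n0 Dinj[of k 0 n, OF k n0 w]] by simp
      then have "tV (dinj k i' w) k i = dinj k i' (tU (dinj k 0 w) k 0) k i" by simp
      then show "blk tV k i k i' w = 0" using i by (simp add: blk_def dinj_def)
    qed
    show "\<forall>j<n k. \<forall>j'<n k. j \<noteq> j' \<longrightarrow> (\<forall>w\<in>W k. blk tU k j k j' w = 0)"
    proof (intro allI impI ballI)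
      fix j j' w assume j: "j < n k" "j' < n k" "j \<noteq> j'" and w: "w \<in> W k"
      have z: "dinj k j' w k j = 0" using j by (simp add: dinj_def)
      have "tV (dinj k 0 (dinj k j' w k j)) = dinj k 0 (tU (dinj k j' w) k j)"
        using HL[OF k m0 j(1) Dinj[of k j' n, OF k j(2) w]] by simp
      then have "dinj k 0 (tU (dinj k j' w) k j) = 0" using z tV0 by simp
      then have "dinj k 0 (tU (dinj k j' w) k j) k 0 = 0" by simp
      then show "blk tU k j k j' w = 0" by (simp add: blk_def)
    qed
    show "\<forall>i<m k. \<forall>j<n k. \<forall>w\<in>W k. blk tV k i k i w = blk tU k j k j w"
    proof (intro allI impI ballI)
      fix i j w assume i: "i < m k" and j: "j < n k" and w: "w \<in> W k"
      have "tV (dinj k i (dinj k j w k j)) = dinj k i (tU (dinj k j w) k j)"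
        using HL[OF k i j Dinj[of k j n, OF k j w]] by simp
      then have "tV (dinj k i w) k i = dinj k i (tU (dinj k j w) k j) k i" by simp
      then show "blk tV k i k i w = blk tU k j k j w" by (simp add: blk_def)
    qed
  qed
  have P2: "\<forall>k\<in>I. \<forall>l\<in>I. k \<noteq> l \<and> m k \<noteq> 0 \<and> n k \<noteq> 0 \<and> n l \<noteq> 0 \<longrightarrow>
        (\<forall>i<n k. \<forall>j<n l. \<forall>w\<in>W l. blk tU k i l j w = 0)"
  proof (intro ballI impI allI)
    fix k l i j w assume k: "k \<in> I" and l: "l \<in> I" and c: "k \<noteq> l \<and> m k \<noteq> 0 \<and> n k \<noteq> 0 \<and> n l \<noteq> 0"
      and i: "i < n k" and j: "j < n l" and w: "w \<in> W l"
    have z: "dinj l j w k i = 0" using c by (simp add: dinj_def)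
    have "tV (dinj k 0 (dinj l j w k i)) = dinj k 0 (tU (dinj l j w) k i)"
      using HL[OF k _ i Dinj[of l j n, OF l j w]] c by simp
    then have "dinj k 0 (tU (dinj l j w) k i) = 0" using z tV0 by simp
    then have "dinj k 0 (tU (dinj l j w) k i) k 0 = 0" by simp
    then show "blk tU k i l j w = 0" by (simp add: blk_def)
  qed
  have P3: "\<forall>k\<in>I. \<forall>l\<in>I. k \<noteq> l \<and> m k \<noteq> 0 \<and> m l \<noteq> 0 \<and> n l \<noteq> 0 \<longrightarrow>
        (\<forall>i<m k. \<forall>j<m l. \<forall>w\<in>W l. blk tV k i l j w = 0)"
  proof (intro ballI impI allI)
    fix k l i j w assume k: "k \<in> I" and l: "l \<in> I" and c: "k \<noteq> l \<and> m k \<noteq> 0 \<and> m l \<noteq> 0 \<and> n l \<noteq> 0"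
      and i: "i < m k" and j: "j < m l" and w: "w \<in> W l"
    have "tV (dinj l j (dinj l 0 w l 0)) = dinj l j (tU (dinj l 0 w) l 0)"
    proof -
      have nl: "0 < n l" using c by simp
      show ?thesis using HL[OF l j nl Dinj[of l 0 n, OF l nl w]] by simp
    qed
    then have "tV (dinj l j w) k i = dinj l j (tU (dinj l 0 w) l 0) k i" by simp
    then show "blk tV k i l j w = 0" using c by (simp add: blk_def dinj_def)
  qed
  show ?thesis using P1 P2 P3 by blast
qed


lemma compL:
  fixes L :: "('k \<Rightarrow> nat \<Rightarrow> 'w) \<Rightarrow> ('k \<Rightarrow> nat \<Rightarrow> 'w)"
  assumes E: "equivariant G (dscale s) (dscale s) (dsum I W n) (dsum I W m) (drep I n \<rho>) (drep I m \<rho>) L"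
    and l: "l \<in> I" "j < n l" and k: "k \<in> I" "i' < m k"
  shows "equivariant G s s (W l) (W k) (\<rho> l) (\<rho> k) (\<lambda>w. L (dinj l j w) k i')"
proof -
  have linL: "lin_on (dscale s) (dscale s) (dsum I W n) (dsum I W m) L"
    and eqL: "\<forall>g\<in>carrier G. \<forall>x\<in>dsum I W n. L (drep I n \<rho> g x) = drep I m \<rho> g (L x)"
    using E unfolding equivariant_def by blast+
  have DI: "dinj l j x \<in> dsum I W n" if "x \<in> W l" for x using Dinj[of l j n, OF l that] .
  show ?thesis unfolding equivariant_def lin_on_def
  proof (intro conjI ballI allI subsetI)
    fix y assume "y \<in> (\<lambda>w. L (dinj l j w) k i') ` W l"
    then obtain w where w: "w \<in> W l" "y = L (dinj l j w) k i'" by blast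
    have LD: "L (dinj l j w) \<in> dsum I W m" using lin_mem[OF linL DI[OF w(1)]] .
    show "y \<in> W k" using dsum_mem[OF LD k] w(2) by simp
  next
    fix x y assume x: "x \<in> W l" and y: "y \<in> W l"
    show "L (dinj l j (x + y)) k i' = L (dinj l j x) k i' + L (dinj l j y) k i'"
      using lin_add[OF linL DI[OF x] DI[OF y]] by (simp add: dinj_add)
  next
    fix c x assume x: "x \<in> W l"
    show "L (dinj l j (s c x)) k i' = s c (L (dinj l j x) k i')"
      using lin_scale[OF linL DI[OF x]] by (simp add: dinj_scale dscale_def)
  next
    fix g x assume g: "g \<in> carrier G" and x: "x \<in> W l"
    have "dinj l j (\<rho> l g x) = drep I n \<rho> g (dinj l j x)"
      using l rho0[OF _ g] by (auto simp: drep_def dinj_def fun_eq_iff)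
    then have "L (dinj l j (\<rho> l g x)) = drep I m \<rho> g (L (dinj l j x))"
      using eqL g DI[OF x] by simp
    then show "L (dinj l j (\<rho> l g x)) k i' = \<rho> k g (L (dinj l j x) k i')"
      using k by (simp add: drep_def)
  qed
qed

lemma offdiag:
  fixes L :: "('k \<Rightarrow> nat \<Rightarrow> 'w) \<Rightarrow> ('k \<Rightarrow> nat \<Rightarrow> 'w)"
  assumes E: "equivariant G (dscale s) (dscale s) (dsum I W n) (dsum I W m) (drep I n \<rho>) (drep I m \<rho>) L"
    and l: "l \<in> I" "j < n l" and k: "k \<in> I" "i' < m k" and kl: "k \<noteq> l" and w: "w \<in> W l"
  shows "L (dinj l j w) k i' = 0"
proof -
  have r: "is_rep G s (W l) (\<rho> l)" "is_rep G s (W k) (\<rho> k)"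
    "irred_rep G s (W l) (\<rho> l)" "irred_rep G s (W k) (\<rho> k)"
    using bspec[OF reps l(1)] bspec[OF reps k(1)] by simp_all
  have ni: "\<not> rep_iso G s (W l) (W k) (\<rho> l) (\<rho> k)" using bspec[OF bspec[OF niso l(1)] k(1)] kl by simp
  show ?thesis
    using schur_zero[OF vs r(1,2,3,4) ni compL[OF E l k] w] .
qed

lemma diag:
  fixes L :: "('k \<Rightarrow> nat \<Rightarrow> 'w) \<Rightarrow> ('k \<Rightarrow> nat \<Rightarrow> 'w)"
  assumes E: "equivariant G (dscale s) (dscale s) (dsum I W n) (dsum I W m) (drep I n \<rho>) (drep I m \<rho>) L"
    and k: "k \<in> I" "j < n k" "i' < m k"
  shows "\<exists>c. \<forall>w\<in>W k. L (dinj k j w) k i' = s c w"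
proof -
  have "schur_strong G s (W k) (\<rho> k)" using bspec[OF reps k(1)] by simp
  then show ?thesis using compL[OF E k(1,2) k(1,3)] unfolding schur_strong_def by blast
qed

lemma Lfun:
  fixes L :: "('k \<Rightarrow> nat \<Rightarrow> 'w) \<Rightarrow> ('k \<Rightarrow> nat \<Rightarrow> 'w)"
  assumes E: "equivariant G (dscale s) (dscale s) (dsum I W n) (dsum I W m) (drep I n \<rho>) (drep I m \<rho>) L"
    and l: "l \<in> I" "j < n l" and w: "w \<in> W l"
  shows "L (dinj l j w) = (\<Sum>i<m l. dinj l i (L (dinj l j w) l i))"
proof -
  have linL: "lin_on (dscale s) (dscale s) (dsum I W n) (dsum I W m) L"
    using E unfolding equivariant_def by blast
  have LD: "L (dinj l j w) \<in> dsum I W m" using lin_mem[OF linL Dinj[of l j n, OF l w]] .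
  show ?thesis
  proof (rule ext, rule ext)
    fix k0 i0
    have R: "(\<Sum>i<m l. dinj l i (L (dinj l j w) l i)) k0 i0
        = (if k0 = l \<and> i0 < m l then L (dinj l j w) l i0 else 0)"
      by (cases "k0 = l") (simp_all add: fun_sum_apply dinj_apply sum.delta sum.delta')
    show "L (dinj l j w) k0 i0 = (\<Sum>i<m l. dinj l i (L (dinj l j w) l i)) k0 i0"
    proof (cases "k0 \<in> I \<and> i0 < m k0")
      case True
      then show ?thesis
        using R offdiag[OF E l _ _ _ w, of k0 i0] by (cases "k0 = l") auto
    next
      case False
      then show ?thesis using R dsum_out[OF LD False] l by auto
    qed
  qed
qed

lemma Lform:
  fixes L :: "('k \<Rightarrow> nat \<Rightarrow> 'w) \<Rightarrow> ('k \<Rightarrow> nat \<Rightarrow> 'w)"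
  assumes E: "equivariant G (dscale s) (dscale s) (dsum I W n) (dsum I W m) (drep I n \<rho>) (drep I m \<rho>) L"
    and k: "k \<in> I" "i' < m k" and v: "v \<in> dsum I W n"
  shows "L v k i' = (\<Sum>j0<n k. L (dinj k j0 (v k j0)) k i')"
proof -
  have linL: "lin_on (dscale s) (dscale s) (dsum I W n) (dsum I W m) L"
    using E unfolding equivariant_def by blast
  have L0: "L 0 = 0" using lin_zero[OF linL D0] .
  show ?thesis
  proof (rule dsum_induct[OF v W0 Wadd, where P = "\<lambda>v. L v k i' = (\<Sum>j0<n k. L (dinj k j0 (v k j0)) k i')"])
    show "L 0 k i' = (\<Sum>j0<n k. L (dinj k j0 (0 k j0)) k i')" using L0 by simp
  next
    fix l j w assume l: "l \<in> I" "j < n l" and w: "w \<in> W l"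
    show "L (dinj l j w) k i' = (\<Sum>j0<n k. L (dinj k j0 (dinj l j w k j0)) k i')"
    proof (cases "k = l")
      case True
      have "(\<Sum>j0<n k. L (dinj k j0 (dinj l j w k j0)) k i') = (\<Sum>j0<n k. if j0 = j then L (dinj k j w) k i' else 0)"
        by (rule sum.cong) (auto simp: True dinj_apply L0)
      also have "\<dots> = L (dinj k j w) k i'" using l True by (simp add: sum.delta)
      finally show ?thesis using True by simp
    next
      case False
      have "(\<Sum>j0<n k. L (dinj k j0 (dinj l j w k j0)) k i') = 0"
        using False by (simp add: dinj_apply L0)
      then show ?thesis using offdiag[OF E l k False w] by simp
    qed
  next
    fix u v :: "'k \<Rightarrow> nat \<Rightarrow> 'w"
    assume u: "u \<in> dsum I W n" and v: "v \<in> dsum I W n"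
      and Pu: "L u k i' = (\<Sum>j0<n k. L (dinj k j0 (u k j0)) k i')"
      and Pv: "L v k i' = (\<Sum>j0<n k. L (dinj k j0 (v k j0)) k i')"
    have "L (u + v) k i' = L u k i' + L v k i'" using lin_add[OF linL u v] by simp
    moreover have "L (dinj k j0 ((u + v) k j0)) k i' = L (dinj k j0 (u k j0)) k i' + L (dinj k j0 (v k j0)) k i'"
      if "j0 < n k" for j0
    proof -
      have "dinj k j0 ((u + v) k j0) = dinj k j0 (u k j0) + dinj k j0 (v k j0)" by (simp add: dinj_add)
      moreover have "dinj k j0 (u k j0) \<in> dsum I W n" "dinj k j0 (v k j0) \<in> dsum I W n"
        using Dinj[of k j0 n, OF k(1) that] dsum_mem[OF u k(1) that] dsum_mem[OF v k(1) that] by auto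
      ultimately show ?thesis using lin_add[OF linL] by simp
    qed
    ultimately show "L (u + v) k i' = (\<Sum>j0<n k. L (dinj k j0 ((u + v) k j0)) k i')"
      using Pu Pv by (simp add: sum.distrib)
  qed
qed



lemma backward:
  fixes L :: "('k \<Rightarrow> nat \<Rightarrow> 'w) \<Rightarrow> ('k \<Rightarrow> nat \<Rightarrow> 'w)"
  assumes C1: "\<forall>k\<in>I. m k \<noteq> 0 \<and> n k \<noteq> 0 \<longrightarrow>
        (\<forall>i<m k. \<forall>i'<m k. i \<noteq> i' \<longrightarrow> (\<forall>w\<in>W k. blk tV k i k i' w = 0))
      \<and> (\<forall>j<n k. \<forall>j'<n k. j \<noteq> j' \<longrightarrow> (\<forall>w\<in>W k. blk tU k j k j' w = 0))
      \<and> (\<forall>i<m k. \<forall>j<n k. \<forall>w\<in>W k. blk tV k i k i w = blk tU k j k j w)"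
    and C2: "\<forall>k\<in>I. \<forall>l\<in>I. k \<noteq> l \<and> m k \<noteq> 0 \<and> n k \<noteq> 0 \<and> n l \<noteq> 0 \<longrightarrow>
        (\<forall>i<n k. \<forall>j<n l. \<forall>w\<in>W l. blk tU k i l j w = 0)"
    and C3: "\<forall>k\<in>I. \<forall>l\<in>I. k \<noteq> l \<and> m k \<noteq> 0 \<and> m l \<noteq> 0 \<and> n l \<noteq> 0 \<longrightarrow>
        (\<forall>i<m k. \<forall>j<m l. \<forall>w\<in>W l. blk tV k i l j w = 0)"
    and E: "equivariant G (dscale s) (dscale s) (dsum I W n) (dsum I W m) (drep I n \<rho>) (drep I m \<rho>) L"
  shows "\<forall>u\<in>dsum I W n. tV (L u) = L (tU u)"
proof -
  have linL: "lin_on (dscale s) (dscale s) (dsum I W n) (dsum I W m) L"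
    using E unfolding equivariant_def by blast
  have L0: "L 0 = 0" using lin_zero[OF linL D0] .
  have tU0: "tU 0 = 0" using lin_zero[OF linU D0] .
  have tV0: "tV 0 = 0" using lin_zero[OF linV D0] .
  have gen: "tV (L (dinj l j w)) = L (tU (dinj l j w))" if l: "l \<in> I" "j < n l" and w: "w \<in> W l" for l j w
  proof (rule ext, rule ext)
    fix k i'
    define x where "x = dinj l j w"
    have xD: "x \<in> dsum I W n" unfolding x_def using Dinj[of l j n, OF l w] .
    have LxD: "L x \<in> dsum I W m" using lin_mem[OF linL xD] .
    have tUxD: "tU x \<in> dsum I W n" using lin_mem[OF linU xD] .
    have LtUxD: "L (tU x) \<in> dsum I W m" using lin_mem[OF linL tUxD] .
    have tVLxD: "tV (L x) \<in> dsum I W m" using lin_mem[OF linV LxD] .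
    show "tV (L (dinj l j w)) k i' = L (tU (dinj l j w)) k i'"
    proof (cases "k \<in> I \<and> i' < m k")
      case False
      then show ?thesis using dsum_out[OF LtUxD False] dsum_out[OF tVLxD False] x_def by simp
    next
      case True
      then have k: "k \<in> I" "i' < m k" by auto
      have R: "L (tU x) k i' = (\<Sum>j0<n k. L (dinj k j0 (tU x k j0)) k i')"
        using Lform[OF E k tUxD] .
      have LxW: "L x l i \<in> W l" if "i < m l" for i using dsum_mem[OF LxD l(1) that] .
      have terms: "\<forall>i\<in>{..<m l}. dinj l i (L x l i) \<in> dsum I W m"
        using Dinj[of l _ m, OF l(1) _ LxW] by blast
      have "L x = (\<Sum>i<m l. dinj l i (L x l i))" unfolding x_def using Lfun[OF E l w] .
      then have "tV (L x) = (\<Sum>i<m l. tV (dinj l i (L x l i)))"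
        using lin_sum[OF linV D0 Dadd _ terms] by simp
      then have Lt: "tV (L x) k i' = (\<Sum>i<m l. blk tV k i' l i (L x l i))"
        by (simp add: fun_sum_apply blk_def)
      have tUx: "tU x k j0 = blk tU k j0 l j w" for j0 by (simp add: x_def blk_def)
      show ?thesis
      proof (cases "k = l")
        case False
        have "(\<Sum>i<m l. blk tV k i' l i (L x l i)) = 0"
        proof (rule sum.neutral, rule ballI)
          fix i assume i: "i \<in> {..<m l}"
          show "blk tV k i' l i (L x l i) = 0"
            using C3 k l False i LxW[of i] by auto
        qed
        moreover have "(\<Sum>j0<n k. L (dinj k j0 (tU x k j0)) k i') = 0"
        proof (rule sum.neutral, rule ballI)
          fix j0 assume j0: "j0 \<in> {..<n k}"
          have "blk tU k j0 l j w = 0" using C2 k l False j0 w by auto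
          then show "L (dinj k j0 (tU x k j0)) k i' = 0" using tUx[of j0] L0 by simp
        qed
        ultimately show ?thesis using Lt R x_def by simp
      next
        case True
        have mk: "m k \<noteq> 0" "n k \<noteq> 0" using k l True by auto
        have C1k: "(\<forall>i<m k. \<forall>i'<m k. i \<noteq> i' \<longrightarrow> (\<forall>w\<in>W k. blk tV k i k i' w = 0))
          \<and> (\<forall>j<n k. \<forall>j'<n k. j \<noteq> j' \<longrightarrow> (\<forall>w\<in>W k. blk tU k j k j' w = 0))
          \<and> (\<forall>i<m k. \<forall>j<n k. \<forall>w\<in>W k. blk tV k i k i w = blk tU k j k j w)"
          using bspec[OF C1 k(1)] mk by blast
        have "(\<Sum>i<m l. blk tV k i' l i (L x l i)) = blk tV k i' k i' (L x k i')"
        proof -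
          have "(\<Sum>i<m l. blk tV k i' l i (L x l i)) = (\<Sum>i<m k. if i = i' then blk tV k i' k i' (L x k i') else 0)"
          proof (rule sum.cong)
            fix i assume i: "i \<in> {..<m k}"
            show "blk tV k i' l i (L x l i) = (if i = i' then blk tV k i' k i' (L x k i') else 0)"
              using C1k k i LxW[of i] True by auto
          qed (simp add: True)
          also have "\<dots> = blk tV k i' k i' (L x k i')" using k by (simp add: sum.delta)
          finally show ?thesis .
        qed
        moreover have "(\<Sum>j0<n k. L (dinj k j0 (tU x k j0)) k i') = L (dinj k j (blk tU k j k j w)) k i'"
        proof -
          have "(\<Sum>j0<n k. L (dinj k j0 (tU x k j0)) k i') = (\<Sum>j0<n k. if j0 = j then L (dinj k j (blk tU k j k j w)) k i' else 0)"
          proof (rule sum.cong)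
            fix j0 assume j0: "j0 \<in> {..<n k}"
            show "L (dinj k j0 (tU x k j0)) k i' = (if j0 = j then L (dinj k j (blk tU k j k j w)) k i' else 0)"
            proof (cases "j0 = j")
              case True
              then show ?thesis using tUx[of j0] \<open>k = l\<close> by simp
            next
              case False
              have "blk tU k j0 l j w = 0" using C1k j0 l \<open>k = l\<close> False w by auto
              then show ?thesis using tUx[of j0] False L0 by simp
            qed
          qed simp
          also have "\<dots> = L (dinj k j (blk tU k j k j w)) k i'" using l True by (simp add: sum.delta)
          finally show ?thesis .
        qed
        moreover obtain c where c: "\<forall>v\<in>W k. L (dinj k j v) k i' = s c v"
          using diag[OF E k(1) _ k(2)] l True by blast
        moreover have "blk tU k j k j w \<in> W k"
        proof -
          have "j < n k" using l True by simp
          then have "tU x k j \<in> W k" using dsum_mem[OF tUxD k(1)] by blast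
          then show ?thesis using tUx[of j] True by simp
        qed
        moreover have "blk tV k i' k i' (s c w) = s c (blk tV k i' k i' w)"
        proof -
          have "dinj k i' (s c w) = dscale s c (dinj k i' w)" by (rule dinj_scale)
          moreover have "tV (dscale s c (dinj k i' w)) = dscale s c (tV (dinj k i' w))"
            using lin_scale[OF linV Dinj[of k i' m, OF k(1) k(2)]] w True by simp
          ultimately show ?thesis by (simp add: blk_def dscale_def)
        qed
        moreover have "blk tV k i' k i' w = blk tU k j k j w" using C1k k l True w by auto
        ultimately show ?thesis using Lt R x_def True w by simp
      qed
    qed
  qed
  show ?thesis
  proof
    fix u assume u: "u \<in> dsum I W n"
    show "tV (L u) = L (tU u)"
    proof (rule dsum_induct[OF u W0 Wadd, where P = "\<lambda>u. tV (L u) = L (tU u)"])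
      show "tV (L 0) = L (tU 0)" using L0 tU0 tV0 by simp
    next
      fix l j w assume "l \<in> I" "j < n l" "w \<in> W l"
      then show "tV (L (dinj l j w)) = L (tU (dinj l j w))" by (rule gen)
    next
      fix u v :: "'k \<Rightarrow> nat \<Rightarrow> 'w"
      assume u: "u \<in> dsum I W n" and v: "v \<in> dsum I W n"
        and Pu: "tV (L u) = L (tU u)" and Pv: "tV (L v) = L (tU v)"
      have "tV (L (u + v)) = tV (L u) + tV (L v)"
        using lin_add[OF linL u v] lin_add[OF linV lin_mem[OF linL u] lin_mem[OF linL v]] by simp
      moreover have "L (tU (u + v)) = L (tU u) + L (tU v)"
        using lin_add[OF linU u v] lin_add[OF linL lin_mem[OF linU u] lin_mem[OF linU v]] by simp
      ultimately show "tV (L (u + v)) = L (tU (u + v))" using Pu Pv by simp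
    qed
  qed
qed


end


theorem proposition5p1:
  fixes G :: "('g, 'b) monoid_scheme"
    and s :: "'a::field \<Rightarrow> 'w::ab_group_add \<Rightarrow> 'w"
    and I :: "'k set" and W :: "'k \<Rightarrow> 'w set" and \<rho> :: "'k \<Rightarrow> 'g \<Rightarrow> 'w \<Rightarrow> 'w"
    and n m :: "'k \<Rightarrow> nat"
    and tU tV :: "('k \<Rightarrow> nat \<Rightarrow> 'w) \<Rightarrow> ('k \<Rightarrow> nat \<Rightarrow> 'w)"
  assumes "group G"
    and "vector_space s"
    and "\<forall>k\<in>I. is_rep G s (W k) (\<rho> k) \<and> irred_rep G s (W k) (\<rho> k) \<and> schur_strong G s (W k) (\<rho> k)"
    and "\<forall>k\<in>I. \<forall>l\<in>I. k \<noteq> l \<longrightarrow> \<not> rep_iso G s (W k) (W l) (\<rho> k) (\<rho> l)"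
    and "lin_on (dscale s) (dscale s) (dsum I W n) (dsum I W n) tU"
    and "lin_on (dscale s) (dscale s) (dsum I W m) (dsum I W m) tV"
  shows "(\<forall>L. equivariant G (dscale s) (dscale s) (dsum I W n) (dsum I W m) (drep I n \<rho>) (drep I m \<rho>) L
             \<longrightarrow> (\<forall>u\<in>dsum I W n. tV (L u) = L (tU u)))
    \<longleftrightarrow>
    ((\<forall>k\<in>I. m k \<noteq> 0 \<and> n k \<noteq> 0 \<longrightarrow>
        (\<forall>i<m k. \<forall>i'<m k. i \<noteq> i' \<longrightarrow> (\<forall>w\<in>W k. blk tV k i k i' w = 0))
      \<and> (\<forall>j<n k. \<forall>j'<n k. j \<noteq> j' \<longrightarrow> (\<forall>w\<in>W k. blk tU k j k j' w = 0))
      \<and> (\<forall>i<m k. \<forall>j<n k. \<forall>w\<in>W k. blk tV k i k i w = blk tU k j k j w))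
   \<and> (\<forall>k\<in>I. \<forall>l\<in>I. k \<noteq> l \<and> m k \<noteq> 0 \<and> n k \<noteq> 0 \<and> n l \<noteq> 0 \<longrightarrow>
        (\<forall>i<n k. \<forall>j<n l. \<forall>w\<in>W l. blk tU k i l j w = 0))
   \<and> (\<forall>k\<in>I. \<forall>l\<in>I. k \<noteq> l \<and> m k \<noteq> 0 \<and> m l \<noteq> 0 \<and> n l \<noteq> 0 \<longrightarrow>
        (\<forall>i<m k. \<forall>j<m l. \<forall>w\<in>W l. blk tV k i l j w = 0)))"
  proof -
  have f: "lin_on (dscale s) (dscale s) (dsum I W n) (dsum I W n) tU" "lin_on (dscale s) (dscale s) (dsum I W m) (dsum I W m) tV"
    using assms(5,6) by auto
  show ?thesis
  proof
    assume H: "\<forall>L. equivariant G (dscale s) (dscale s) (dsum I W n) (dsum I W m) (drep I n \<rho>) (drep I m \<rho>) L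
             \<longrightarrow> (\<forall>u\<in>dsum I W n. tV (L u) = L (tU u))"
    show "((\<forall>k\<in>I. m k \<noteq> 0 \<and> n k \<noteq> 0 \<longrightarrow>
        (\<forall>i<m k. \<forall>i'<m k. i \<noteq> i' \<longrightarrow> (\<forall>w\<in>W k. blk tV k i k i' w = 0))
      \<and> (\<forall>j<n k. \<forall>j'<n k. j \<noteq> j' \<longrightarrow> (\<forall>w\<in>W k. blk tU k j k j' w = 0))
      \<and> (\<forall>i<m k. \<forall>j<n k. \<forall>w\<in>W k. blk tV k i k i w = blk tU k j k j w))
   \<and> (\<forall>k\<in>I. \<forall>l\<in>I. k \<noteq> l \<and> m k \<noteq> 0 \<and> n k \<noteq> 0 \<and> n l \<noteq> 0 \<longrightarrow>
        (\<forall>i<n k. \<forall>j<n l. \<forall>w\<in>W l. blk tU k i l j w = 0))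
   \<and> (\<forall>k\<in>I. \<forall>l\<in>I. k \<noteq> l \<and> m k \<noteq> 0 \<and> m l \<noteq> 0 \<and> n l \<noteq> 0 \<longrightarrow>
        (\<forall>i<m k. \<forall>j<m l. \<forall>w\<in>W l. blk tV k i l j w = 0)))"
      by (rule forward[OF assms(2,3,4,5,6) H])
  next
    assume C: "((\<forall>k\<in>I. m k \<noteq> 0 \<and> n k \<noteq> 0 \<longrightarrow>
        (\<forall>i<m k. \<forall>i'<m k. i \<noteq> i' \<longrightarrow> (\<forall>w\<in>W k. blk tV k i k i' w = 0))
      \<and> (\<forall>j<n k. \<forall>j'<n k. j \<noteq> j' \<longrightarrow> (\<forall>w\<in>W k. blk tU k j k j' w = 0))
      \<and> (\<forall>i<m k. \<forall>j<n k. \<forall>w\<in>W k. blk tV k i k i w = blk tU k j k j w))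
   \<and> (\<forall>k\<in>I. \<forall>l\<in>I. k \<noteq> l \<and> m k \<noteq> 0 \<and> n k \<noteq> 0 \<and> n l \<noteq> 0 \<longrightarrow>
        (\<forall>i<n k. \<forall>j<n l. \<forall>w\<in>W l. blk tU k i l j w = 0))
   \<and> (\<forall>k\<in>I. \<forall>l\<in>I. k \<noteq> l \<and> m k \<noteq> 0 \<and> m l \<noteq> 0 \<and> n l \<noteq> 0 \<longrightarrow>
        (\<forall>i<m k. \<forall>j<m l. \<forall>w\<in>W l. blk tV k i l j w = 0)))"
    show "\<forall>L. equivariant G (dscale s) (dscale s) (dsum I W n) (dsum I W m) (drep I n \<rho>) (drep I m \<rho>) L
             \<longrightarrow> (\<forall>u\<in>dsum I W n. tV (L u) = L (tU u))"
    proof (intro allI impI)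
      fix L assume E: "equivariant G (dscale s) (dscale s) (dsum I W n) (dsum I W m) (drep I n \<rho>) (drep I m \<rho>) L"
      have C1: "\<forall>k\<in>I. m k \<noteq> 0 \<and> n k \<noteq> 0 \<longrightarrow>
        (\<forall>i<m k. \<forall>i'<m k. i \<noteq> i' \<longrightarrow> (\<forall>w\<in>W k. blk tV k i k i' w = 0))
      \<and> (\<forall>j<n k. \<forall>j'<n k. j \<noteq> j' \<longrightarrow> (\<forall>w\<in>W k. blk tU k j k j' w = 0))
      \<and> (\<forall>i<m k. \<forall>j<n k. \<forall>w\<in>W k. blk tV k i k i w = blk tU k j k j w)"
        using C by (rule conjunct1)
      have C23: "(\<forall>k\<in>I. \<forall>l\<in>I. k \<noteq> l \<and> m k \<noteq> 0 \<and> n k \<noteq> 0 \<and> n l \<noteq> 0 \<longrightarrow>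
        (\<forall>i<n k. \<forall>j<n l. \<forall>w\<in>W l. blk tU k i l j w = 0))
   \<and> (\<forall>k\<in>I. \<forall>l\<in>I. k \<noteq> l \<and> m k \<noteq> 0 \<and> m l \<noteq> 0 \<and> n l \<noteq> 0 \<longrightarrow>
        (\<forall>i<m k. \<forall>j<m l. \<forall>w\<in>W l. blk tV k i l j w = 0))"
        using C by (rule conjunct2)
      show "\<forall>u\<in>dsum I W n. tV (L u) = L (tU u)"
        by (rule backward[OF assms(2,3,4,5,6) C1 conjunct1[OF C23] conjunct2[OF C23] E])
    qed
  qed
qed

end
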